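(* Let $G$ and $H$ be nontrivial finite groups. The cyclic graph $\Delta(G\times H)$ is disconnected if and only if there exists a prime $p$ such that $G$ contains an element of order $p$ whose centralizer in $G$ is a $p$-group and $H$ contains an element of order $p$ whose centralizer in $H$ is a $p$-group.
   Context: For a finite group $X$, the cyclic graph $\Delta(X)$ has vertex set $X^{\#}=X\setminus\{1\}$, and distinct vertices $x,y$ are adjacent if and only if the subgroup $\langle x,y\rangle$ is cyclic. *)

theory Defs
  imports "HOL-Algebra.Algebra"
begin

definition elem_centralizer :: "('a, 'b) monoid_scheme \<Rightarrow> 'a \<Rightarrow> 'a set" where
  "elem_centralizer M x = {g \<in> carrier M. g \<otimes>\<^bsub>M\<^esub> x = x \<otimes>\<^bsub>M\<^esub> g}"

definition is_p_group_set :: "nat \<Rightarrow> 'a set \<Rightarrow> bool" where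
  "is_p_group_set p S \<longleftrightarrow> finite S \<and> (\<exists>n::nat. card S = p ^ n)"

definition cyclic_graph_vertices :: "('a, 'b) monoid_scheme \<Rightarrow> 'a set" where
  "cyclic_graph_vertices M = carrier M - {\<one>\<^bsub>M\<^esub>}"

definition cyclic_graph_adj :: "('a, 'b) monoid_scheme \<Rightarrow> 'a \<Rightarrow> 'a \<Rightarrow> bool" where
  "cyclic_graph_adj M x y \<longleftrightarrow>
     x \<in> cyclic_graph_vertices M \<and> y \<in> cyclic_graph_vertices M \<and> x \<noteq> y \<and>
     cyclic_group (subgroup_generated M {x, y})"

definition cyclic_graph_connected :: "('a, 'b) monoid_scheme \<Rightarrow> bool" where
  "cyclic_graph_connected M \<longleftrightarrow>
     (\<forall>x \<in> cyclic_graph_vertices M. \<forall>y \<in> cyclic_graph_vertices M.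
        (x, y) \<in> {(a, b). cyclic_graph_adj M a b}\<^sup>*)"

end

theory Submission
  imports Defs
begin


context group
begin

lemma gen_nat_pow: "x \<in> carrier G \<Longrightarrow> x [^] (n::nat) \<in> generate G {x}"
  using generate_pow_on_finite_carrier generate_pow[of x] int_pow_int by (metis (mono_tags, lifting) UNIV_I mem_Collect_eq)

lemma gen_sub: "y \<in> generate G {x} \<Longrightarrow> x \<in> carrier G \<Longrightarrow> generate G {y} \<subseteq> generate G {x}"
  by (simp add: generate_is_subgroup generate_subgroup_incl)

lemma gen_carrier: "y \<in> generate G S \<Longrightarrow> S \<subseteq> carrier G \<Longrightarrow> y \<in> carrier G"
  using generate_incl by blast

lemma ord_sub:
  assumes "subgroup K G" "x \<in> K"
  shows "group.ord (subgroup_generated G K) x = ord x"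
proof -
  interpret S: group "subgroup_generated G K" by simp
  have xc: "x \<in> carrier (subgroup_generated G K)" using assms subgroup.carrier_subgroup_generated_subgroup by blast
  have xg: "x \<in> carrier G" using assms subgroup.subset by blast
  show ?thesis
    using S.ord_unique[OF xc] pow_eq_id[OF xg] S.pow_eq_id[OF xc]
    by (simp add: pow_subgroup_generated)
qed

lemma ord_dvd_sub:
  assumes "finite (carrier G)" "subgroup K G" "x \<in> K"
  shows "ord x dvd card K"
proof -
  interpret S: group "subgroup_generated G K" by simp
  have xc: "x \<in> carrier (subgroup_generated G K)" using assms subgroup.carrier_subgroup_generated_subgroup by blast
  have "S.ord x dvd order (subgroup_generated G K)"
    using S.ord_dvd_group_order[OF xc] .
  then show ?thesis using ord_sub[OF assms(2,3)] subgroup.carrier_subgroup_generated_subgroup[OF assms(2)] by (simp add: order_def)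
qed

lemma cauchy_sub:
  assumes fin: "finite (carrier G)" and K: "subgroup K G" and p: "Factorial_Ring.prime p" and dv: "p dvd card K"
  shows "\<exists>x\<in>K. ord x = p"
proof -
  interpret S: group "subgroup_generated G K" by simp
  have cK: "carrier (subgroup_generated G K) = K" using K subgroup.carrier_subgroup_generated_subgroup by blast
  have finK: "finite K" using fin K subgroup.subset finite_subset by blast
  obtain m where m: "card K = p * m" using dv by blast
  have "\<exists>P. subgroup P (subgroup_generated G K) \<and> card P = p ^ 1"
    apply (rule sylow_thm[OF p S.is_group, of 1 m])
    using m cK finK by (auto simp: order_def)
  then obtain P where P: "subgroup P (subgroup_generated G K)" "card P = p" by auto
  have PK: "P \<subseteq> K" using P(1) subgroup.subset cK by blast
  have "card P > 1" using P(2) p prime_gt_1_nat by auto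
  then obtain h where h: "h \<in> P" "h \<noteq> \<one>"
  proof -
    have "\<not> P \<subseteq> {\<one>}" using card_mono[of "{\<one>}" P] \<open>card P > 1\<close> by auto
    then show ?thesis using that by blast
  qed
  have "S.ord h dvd card P"
    using S.ord_dvd_sub[OF _ P(1) h(1)] finK cK by simp
  moreover have "S.ord h = ord h" using ord_sub[OF K] PK h by auto
  moreover have "h \<in> carrier G" using PK h K subgroup.subset by blast
  ultimately have "ord h dvd p" "ord h \<noteq> 1" using h ord_eq_1 P(2) by auto
  then have "ord h = p" using p by (meson prime_nat_iff)
  then show ?thesis using h PK by blast
qed

end


lemma primepow_aux:
  fixes n p :: nat
  assumes "n > 0" "\<forall>q. Factorial_Ring.prime q \<and> q dvd n \<longrightarrow> q = p"
  shows "\<exists>m. n = p ^ m"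
  using assms
proof (induction n rule: less_induct)
  case (less n)
  show ?case
  proof (cases "n = 1")
    case True then show ?thesis by (metis power_0)
  next
    case False
    then obtain q where q: "Factorial_Ring.prime q" "q dvd n" using prime_factor_nat by blast
    then have qp: "q = p" using less.prems by blast
    obtain n' where n': "n = q * n'" using q by blast
    have "n' < n" using n' less.prems(1) q(1) prime_gt_1_nat by (simp add: n')
    moreover have "n' > 0" using n' less.prems(1) by simp
    moreover have "\<forall>r. Factorial_Ring.prime r \<and> r dvd n' \<longrightarrow> r = p" using less.prems(2) n' by auto
    ultimately obtain m where "n' = p ^ m" using less.IH by blast
    then show ?thesis using n' qp by (metis power_Suc)
  qed
qed

context group
begin

lemma centralizer_subgroup:
  assumes "x \<in> carrier G"
  shows "subgroup (elem_centralizer G x) G"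
proof (rule subgroupI)
  show "elem_centralizer G x \<subseteq> carrier G" by (auto simp: elem_centralizer_def)
  show "elem_centralizer G x \<noteq> {}" using assms by (auto simp: elem_centralizer_def)
next
  fix a assume a: "a \<in> elem_centralizer G x"
  then have ac: "a \<in> carrier G" "a \<otimes> x = x \<otimes> a" by (auto simp: elem_centralizer_def)
  have "inv a \<otimes> x = x \<otimes> inv a"
  proof -
    have "inv a \<otimes> x = inv a \<otimes> (x \<otimes> a) \<otimes> inv a" using ac(1) assms by (simp add: m_assoc)
    also have "\<dots> = inv a \<otimes> (a \<otimes> x) \<otimes> inv a" using ac by simp
    also have e: "inv a \<otimes> (a \<otimes> x) = x" using ac(1) assms by (simp add: m_assoc[symmetric])
    finally show ?thesis using e by simp
  qed
  then show "inv a \<in> elem_centralizer G x" using ac by (auto simp: elem_centralizer_def)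
next
  fix a b assume "a \<in> elem_centralizer G x" "b \<in> elem_centralizer G x"
  then have ab: "a \<in> carrier G" "a \<otimes> x = x \<otimes> a" "b \<in> carrier G" "b \<otimes> x = x \<otimes> b"
    by (auto simp: elem_centralizer_def)
  have "a \<otimes> b \<otimes> x = x \<otimes> (a \<otimes> b)"
    using ab assms by (metis m_assoc)
  then show "a \<otimes> b \<in> elem_centralizer G x" using ab by (auto simp: elem_centralizer_def)
qed

lemma non_pgroup_prime:
  assumes fin: "finite (carrier G)" and K: "subgroup K G" and "\<not> is_p_group_set p K"
  shows "\<exists>r c. Factorial_Ring.prime r \<and> r \<noteq> p \<and> c \<in> K \<and> ord c = r"
proof -
  have finK: "finite K" using fin K subgroup.subset finite_subset by blast
  have "card K > 0" using finK K subgroup.one_closed card_gt_0_iff by blast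
  then obtain r where r: "Factorial_Ring.prime r" "r dvd card K" "r \<noteq> p"
    using primepow_aux[of "card K" p] assms(3) finK unfolding is_p_group_set_def by blast
  then show ?thesis using cauchy_sub[OF fin K r(1,2)] by blast
qed

lemma cyc_gen:
  assumes "x \<in> carrier G" "y \<in> carrier G" "c \<in> carrier G"
    and "x \<in> generate G {c}" "y \<in> generate G {c}" "c \<in> generate G {x, y}"
  shows "cyclic_group (subgroup_generated G {x, y})"
proof -
  have "generate G {x, y} \<subseteq> generate G {c}"
    using assms by (intro generate_subgroup_incl) (auto intro: generate_is_subgroup)
  moreover have "generate G {c} \<subseteq> generate G {x, y}"
    using assms by (intro generate_subgroup_incl) (auto intro: generate_is_subgroup)
  ultimately have "generate G {x, y} = generate G {c}" by blast
  then have "subgroup_generated G {x, y} = subgroup_generated G {c}"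
    using assms by (simp add: subgroup_generated_def Int_absorb1)
  then show ?thesis using cyclic_group_generated by simp
qed

lemma coprime_gen:
  assumes fin: "finite (carrier G)" and u: "u \<in> carrier G" and v: "v \<in> carrier G"
    and comm: "u \<otimes> v = v \<otimes> u" and cop: "coprime (ord u) (ord v)"
  shows "u \<in> generate G {u \<otimes> v}"
proof -
  have ov: "ord v \<noteq> 0" using ord_ge_1[OF fin v] by simp
  obtain s t where st: "ord v * s = ord u * t + gcd (ord v) (ord u)"
    using bezout_nat[OF ov] by blast
  then have st1: "ord v * s = ord u * t + 1" using cop by (simp add: coprime_iff_gcd_eq_1 gcd.commute)
  have "(u \<otimes> v) [^] (ord v * s) = u [^] (ord v * s) \<otimes> v [^] (ord v * s)"
    using pow_mult_distrib[OF comm u v] .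
  also have "v [^] (ord v * s) = \<one>" using v by (simp add: pow_eq_id)
  also have "u [^] (ord v * s) = u" 
  proof -
    have "u [^] (ord v * s) = u [^] (ord u * t) \<otimes> u [^] (1::nat)"
      using st1 u by (simp add: nat_pow_mult)
    also have "u [^] (ord u * t) = \<one>" using u by (simp add: pow_eq_id)
    finally show ?thesis using u by simp
  qed
  finally have "u = (u \<otimes> v) [^] (ord v * s)" using u by simp
  then show ?thesis using gen_nat_pow[of "u \<otimes> v" "ord v * s"] u v by (metis m_closed)
qed

lemma coprime_cyc:
  assumes fin: "finite (carrier G)" and u: "u \<in> carrier G" and v: "v \<in> carrier G"
    and comm: "u \<otimes> v = v \<otimes> u" and cop: "coprime (ord u) (ord v)"
  shows "cyclic_group (subgroup_generated G {u, v})"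
proof (rule cyc_gen[of u v "u \<otimes> v"])
  show "u \<in> generate G {u \<otimes> v}" using coprime_gen assms by blast
  show "v \<in> generate G {u \<otimes> v}" using coprime_gen[OF fin v u comm[symmetric]] cop comm
    by (simp add: coprime_commute)
  show "u \<otimes> v \<in> generate G {u, v}"
    by (meson generate.eng generate.incl insertI1 insertI2 singletonI)
qed (use u v in auto)

lemma coprime_adj:
  assumes fin: "finite (carrier G)" and u: "u \<in> carrier G" and v: "v \<in> carrier G"
    and comm: "u \<otimes> v = v \<otimes> u" and cop: "coprime (ord u) (ord v)"
    and "u \<noteq> \<one>" "v \<noteq> \<one>"
  shows "cyclic_graph_adj G u v"
proof -
  have "u \<noteq> v"
  proof
    assume "u = v"
    then have "ord u = 1" using cop by simp
    then show False using ord_eq_1 u assms(6) by blast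
  qed
  then show ?thesis using coprime_cyc[OF assms(1-5)] assms(6,7) u v
    by (simp add: cyclic_graph_adj_def cyclic_graph_vertices_def)
qed

lemma pow_adj:
  assumes w: "w \<in> carrier G" and "w \<noteq> \<one>" "w [^] (n::nat) \<noteq> \<one>" "w [^] n \<noteq> w"
  shows "cyclic_graph_adj G w (w [^] n)"
proof -
  have "cyclic_group (subgroup_generated G {w, w [^] n})"
    by (rule cyc_gen[of _ _ w]) (use w gen_nat_pow in \<open>auto intro: generate.incl\<close>)
  then show ?thesis using assms by (simp add: cyclic_graph_adj_def cyclic_graph_vertices_def)
qed

end


lemma nat_dvd_primepow:
  fixes a p n :: nat
  assumes "Factorial_Ring.prime p" "a dvd p ^ n"
  shows "\<exists>m\<le>n. a = p ^ m"
proof -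
  obtain m where "m \<le> n" "normalize a = p ^ m" using divides_primepow[OF assms] by blast
  then show ?thesis by auto
qed

context group
begin

lemma gen_fin_pow:
  assumes "finite (carrier G)" "c \<in> carrier G" "y \<in> generate G {c}"
  shows "\<exists>a::nat. y = c [^] a"
  using generate_pow_on_finite_carrier[OF assms(1,2)] assms(3) by blast

lemma cyc_p:
  assumes fin: "finite (carrier G)" and c: "c \<in> carrier G" and p: "Factorial_Ring.prime p"
    and oc: "ord c = p ^ k" and z: "z \<in> generate G {c}" "ord z = p"
    and v: "v \<in> generate G {c}" "v \<noteq> \<one>"
  shows "z \<in> generate G {v}"
proof -
  have p1: "p > 1" using p prime_gt_1_nat by blast
  have zc: "z \<in> carrier G" using z gen_carrier c by blast
  have vc: "v \<in> carrier G" using v gen_carrier c by blast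
  have k0: "k \<noteq> 0"
  proof
    assume "k = 0"
    then have "c = \<one>" using oc ord_eq_1 c by simp
    then have "z = \<one>" using z gen_fin_pow[OF fin c z(1)] by auto
    then show False using z p1 by simp
  qed
  define d where "d = c [^] (p ^ (k - 1))"
  have dc: "d \<in> carrier G" unfolding d_def using c by simp
  have pk: "p ^ k = p ^ (k - 1) * p" using k0 by (cases k) auto
  have od: "ord d = p"
  proof -
    have dv: "p ^ (k - 1) dvd ord c" unfolding oc by (simp add: le_imp_power_dvd)
    have "ord d = p ^ k div p ^ (k - 1)"
      unfolding d_def using ord_pow[OF c dv] oc p1 by simp
    also have "\<dots> = p" by (subst pk) (use p1 in simp)
    finally show ?thesis .
  qed
  have Y: "y \<in> generate G {d}" if y: "y \<in> generate G {c}" "y [^] p = \<one>" for y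
  proof -
    obtain a :: nat where a: "y = c [^] a" using gen_fin_pow[OF fin c y(1)] by blast
    have "c [^] (a * p) = \<one>" using y(2) a c by (simp add: nat_pow_pow)
    then have "ord c dvd a * p" using pow_eq_id[OF c] by blast
    then have "p ^ (k - 1) * p dvd a * p" unfolding pk[symmetric] oc[symmetric] .
    then have "p ^ (k - 1) dvd a" using p1 by simp
    then obtain t where "a = p ^ (k - 1) * t" by blast
    then have "y = d [^] t" using a c d_def by (simp add: nat_pow_pow)
    then show ?thesis using gen_nat_pow[OF dc] by simp
  qed
  obtain a :: nat where a: "v = c [^] a" using gen_fin_pow[OF fin c v(1)] by blast
  have "v [^] (p ^ k) = (c [^] (p ^ k)) [^] a" using a c by (simp add: nat_pow_pow mult.commute)
  also have "c [^] (p ^ k) = \<one>" using c oc pow_ord_eq_1 by metis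
  finally have "v [^] (p ^ k) = \<one>" by simp
  then have "ord v dvd p ^ k" using pow_eq_id[OF vc] by simp
  then obtain e where e: "ord v = p ^ e" using nat_dvd_primepow[OF p] by blast
  have e0: "e \<noteq> 0" using e v ord_eq_1[OF vc] by auto
  define v' where "v' = v [^] (p ^ (e - 1))"
  have v'c: "v' \<in> carrier G" unfolding v'_def using vc by simp
  have pe: "p ^ e = p ^ (e - 1) * p" using e0 by (cases e) auto
  have ov': "ord v' = p"
  proof -
    have dv: "p ^ (e - 1) dvd ord v" unfolding e by (simp add: le_imp_power_dvd)
    have "ord v' = p ^ e div p ^ (e - 1)"
      unfolding v'_def using ord_pow[OF vc dv] e p1 by simp
    also have "\<dots> = p" by (subst pe) (use p1 in simp)
    finally show ?thesis .
  qed
  have v'v: "v' \<in> generate G {v}" using gen_nat_pow[OF vc] v'_def by simp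
  have "generate G {v} \<subseteq> generate G {c}" using gen_sub[OF v(1) c] .
  then have "v' \<in> generate G {d}" using Y[of v'] v'v v'c ov' by auto
  then have sub: "generate G {v'} \<subseteq> generate G {d}" using gen_sub dc by blast
  have "card (generate G {v'}) = card (generate G {d})"
    using generate_pow_card[OF v'c] generate_pow_card[OF dc] ov' od by simp
  moreover have "finite (generate G {d})"
    using fin generate_incl[of "{d}"] dc finite_subset by blast
  ultimately have eq: "generate G {v'} = generate G {d}" using sub card_subset_eq by blast
  have "z \<in> generate G {d}" using Y[of z] z zc pow_ord_eq_1[OF zc] by simp
  then have "z \<in> generate G {v'}" using eq by simp
  then show ?thesis using gen_sub[OF v'v vc] by blast
qed

end


lemma pow_DirProd:
  assumes "group G" "group H"
  shows "(a, b) [^]\<^bsub>G \<times>\<times> H\<^esub> (n::nat) = (a [^]\<^bsub>G\<^esub> n, b [^]\<^bsub>H\<^esub> n)"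
  by (induction n) auto

lemma pow_DirProd_one:
  assumes "group G" "group H" "a \<in> carrier G" "b \<in> carrier H"
  shows "(a, b) [^]\<^bsub>G \<times>\<times> H\<^esub> (n::nat) = \<one>\<^bsub>G \<times>\<times> H\<^esub> \<longleftrightarrow>
     a [^]\<^bsub>G\<^esub> n = \<one>\<^bsub>G\<^esub> \<and> b [^]\<^bsub>H\<^esub> n = \<one>\<^bsub>H\<^esub>"
  using pow_DirProd[OF assms(1,2)] by simp

lemma ord_DirProd_left:
  assumes G: "group G" and H: "group H" and a: "a \<in> carrier G"
  shows "group.ord (G \<times>\<times> H) (a, \<one>\<^bsub>H\<^esub>) = group.ord G a"
proof -
  interpret X: group "G \<times>\<times> H" using DirProd_group[OF G H] .
  have c: "(a, \<one>\<^bsub>H\<^esub>) \<in> carrier (G \<times>\<times> H)" using a monoid.one_closed[OF group.is_monoid[OF H]] by simp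
  show ?thesis
    using X.ord_unique[OF c] pow_DirProd_one[OF G H a monoid.one_closed[OF group.is_monoid[OF H]]]
      group.pow_eq_id[OF G a] monoid.nat_pow_one group.is_monoid[OF H]
    by auto
qed

lemma ord_DirProd_right:
  assumes G: "group G" and H: "group H" and b: "b \<in> carrier H"
  shows "group.ord (G \<times>\<times> H) (\<one>\<^bsub>G\<^esub>, b) = group.ord H b"
proof -
  interpret X: group "G \<times>\<times> H" using DirProd_group[OF G H] .
  have c: "(\<one>\<^bsub>G\<^esub>, b) \<in> carrier (G \<times>\<times> H)" using b monoid.one_closed[OF group.is_monoid[OF G]] by simp
  show ?thesis
    using X.ord_unique[OF c] pow_DirProd_one[OF G H monoid.one_closed[OF group.is_monoid[OF G]] b]
      group.pow_eq_id[OF H b] group.is_monoid[OF G] monoid.nat_pow_one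
    by auto
qed

lemma ord_DirProd_same:
  assumes G: "group G" and H: "group H" and a: "a \<in> carrier G" and b: "b \<in> carrier H"
    and "group.ord G a = d" "group.ord H b = d"
  shows "group.ord (G \<times>\<times> H) (a, b) = d"
proof -
  interpret X: group "G \<times>\<times> H" using DirProd_group[OF G H] .
  have c: "(a, b) \<in> carrier (G \<times>\<times> H)" using a b by simp
  show ?thesis
    using X.ord_unique[OF c] pow_DirProd_one[OF G H a b]
      group.pow_eq_id[OF H b] group.pow_eq_id[OF G a] assms(5,6)
    by auto
qed

lemma centralizer_DirProd:
  "elem_centralizer (G \<times>\<times> H) (x, y) = elem_centralizer G x \<times> elem_centralizer H y"
  by (auto simp: elem_centralizer_def)



definition cg_rel :: "('a, 'b) monoid_scheme \<Rightarrow> ('a \<times> 'a) set" where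
  "cg_rel M = {(a, b). cyclic_graph_adj M a b}"

lemma adj_sym: "cyclic_graph_adj M a b \<Longrightarrow> cyclic_graph_adj M b a"
  by (auto simp: cyclic_graph_adj_def insert_commute)

lemma rel_sym: "(a, b) \<in> (cg_rel M)\<^sup>* \<Longrightarrow> (b, a) \<in> (cg_rel M)\<^sup>*"
proof (induction rule: rtrancl_induct)
  case base then show ?case by simp
next
  case (step y z)
  then have "(z, y) \<in> cg_rel M" by (auto simp: cg_rel_def adj_sym)
  then show ?case using step.IH by (meson converse_rtrancl_into_rtrancl)
qed

lemma adj_rel: "cyclic_graph_adj M a b \<Longrightarrow> (a, b) \<in> (cg_rel M)\<^sup>*"
  by (auto simp: cg_rel_def)

context group
begin

lemma reach_prime:
  assumes fin: "finite (carrier G)" and w: "w \<in> carrier G" "w \<noteq> \<one>"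
  shows "\<exists>w'\<in>carrier G. Factorial_Ring.prime (ord w') \<and> (w, w') \<in> (cg_rel G)\<^sup>*"
proof -
  have "ord w \<noteq> 1" using w ord_eq_1 by blast
  then obtain q where q: "Factorial_Ring.prime q" "q dvd ord w" using prime_factor_nat by blast
  have o0: "ord w \<noteq> 0" using ord_ge_1[OF fin w(1)] by simp
  obtain t where t: "ord w = q * t" using q(2) by blast
  have qpos: "q > 0" using q(1) prime_gt_0_nat by blast
  have tq: "ord w div q = t" using t qpos by simp
  define w' where "w' = w [^] t"
  have dv: "t dvd ord w" using t by simp
  have nz: "t \<noteq> 0" using t o0 by auto
  have ow': "ord w' = q"
  proof -
    have "ord w' = ord w div t" unfolding w'_def using ord_pow[OF w(1) dv nz] .
    also have "\<dots> = q" using t nz by simp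
    finally show ?thesis .
  qed
  have w'c: "w' \<in> carrier G" unfolding w'_def using w by simp
  have "w' \<noteq> \<one>" using ow' q(1) by auto
  then have "(w, w') \<in> (cg_rel G)\<^sup>*"
    using pow_adj[OF w(1,2), of t] adj_rel unfolding w'_def by (cases "w [^] t = w") auto
  then show ?thesis using w'c ow' q by blast
qed

lemma inv_step:
  assumes fin: "finite (carrier G)" and zc: "z \<in> carrier G" and oz: "ord z = p"
    and p: "Factorial_Ring.prime p" and pg: "is_p_group_set p (elem_centralizer G z)"
    and zw: "z \<in> generate G {w}" and adj: "cyclic_graph_adj G w v"
  shows "z \<in> generate G {v}"
proof -
  have wv: "w \<in> carrier G" "v \<in> carrier G" "v \<noteq> \<one>"
    and cyc: "cyclic_group (subgroup_generated G {w, v})"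
    using adj by (auto simp: cyclic_graph_adj_def cyclic_graph_vertices_def)
  interpret S: group "subgroup_generated G {w, v}" by simp
  obtain c where c: "c \<in> carrier (subgroup_generated G {w, v})"
    "carrier (subgroup_generated G {w, v}) = range (\<lambda>n::int. c [^]\<^bsub>subgroup_generated G {w, v}\<^esub> n)"
    using S.cyclic_group cyc by blast
  have cS: "carrier (subgroup_generated G {w, v}) = generate G {w, v}"
    using wv by (simp add: carrier_subgroup_generated Int_absorb1)
  have cc: "c \<in> carrier G" using c(1) cS gen_carrier wv by blast
  have "carrier (subgroup_generated G {w, v}) = range (\<lambda>n::int. c [^] n)"
    using c int_pow_subgroup_generated[OF c(1)] by simp
  then have gc: "generate G {w, v} = generate G {c}"
    using cS generate_pow[OF cc] by auto
  have wg: "w \<in> generate G {c}" and vg: "v \<in> generate G {c}"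
    using gc by (auto intro: generate.incl)
  have zg: "z \<in> generate G {c}" using gen_sub[OF wg cc] zw by blast
  obtain a :: nat where a: "z = c [^] a" using gen_fin_pow[OF fin cc zg] by blast
  have "c \<otimes> z = z \<otimes> c" using a cc nat_pow_Suc2[of c a] nat_pow_Suc[of c a] by metis
  then have "c \<in> elem_centralizer G z" using cc by (simp add: elem_centralizer_def)
  then have "ord c dvd card (elem_centralizer G z)"
    using ord_dvd_sub[OF fin centralizer_subgroup[OF zc]] by blast
  moreover obtain m where "card (elem_centralizer G z) = p ^ m"
    using pg unfolding is_p_group_set_def by blast
  ultimately obtain k where "ord c = p ^ k"
    using nat_dvd_primepow[OF p] by auto
  then show ?thesis using cyc_p[OF fin cc p _ zg oz vg wv(3)] by blast
qed

end


theorem corollary4p6: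
  fixes G :: "('a, 'c) monoid_scheme" and H :: "('b, 'd) monoid_scheme"
  assumes "group G" and "group H"
    and "finite (carrier G)" and "finite (carrier H)"
    and "carrier G \<noteq> {\<one>\<^bsub>G\<^esub>}" and "carrier H \<noteq> {\<one>\<^bsub>H\<^esub>}"
  shows "\<not> cyclic_graph_connected (G \<times>\<times> H) \<longleftrightarrow>
    (\<exists>p::nat. Factorial_Ring.prime p \<and>
       (\<exists>x \<in> carrier G. group.ord G x = p \<and> is_p_group_set p (elem_centralizer G x)) \<and>
       (\<exists>y \<in> carrier H. group.ord H y = p \<and> is_p_group_set p (elem_centralizer H y)))"
proof -
  interpret G: group G by fact
  interpret H: group H by fact
  interpret X: group "G \<times>\<times> H" using DirProd_group[OF assms(1,2)] .
  have finX: "finite (carrier (G \<times>\<times> H))" using assms(3,4) by simp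
  have conn_def: "cyclic_graph_connected (G \<times>\<times> H) \<longleftrightarrow>
     (\<forall>x \<in> cyclic_graph_vertices (G \<times>\<times> H). \<forall>y \<in> cyclic_graph_vertices (G \<times>\<times> H).
        (x, y) \<in> (cg_rel (G \<times>\<times> H))\<^sup>*)"
    by (simp add: cyclic_graph_connected_def cg_rel_def)
  have ordL: "X.ord (a, \<one>\<^bsub>H\<^esub>) = G.ord a" if "a \<in> carrier G" for a
    using ord_DirProd_left[OF assms(1,2) that] .
  have ordR: "X.ord (\<one>\<^bsub>G\<^esub>, b) = H.ord b" if "b \<in> carrier H" for b
    using ord_DirProd_right[OF assms(1,2) that] .
  show ?thesis
  proof
    assume nc: "\<not> cyclic_graph_connected (G \<times>\<times> H)"
    show "\<exists>p::nat. Factorial_Ring.prime p \<and>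
       (\<exists>x \<in> carrier G. group.ord G x = p \<and> is_p_group_set p (elem_centralizer G x)) \<and>
       (\<exists>y \<in> carrier H. group.ord H y = p \<and> is_p_group_set p (elem_centralizer H y))"
    proof (rule ccontr)
      assume N0: "\<not> ?thesis"
      have N: "(\<forall>x\<in>carrier G. G.ord x = p \<longrightarrow> \<not> is_p_group_set p (elem_centralizer G x)) \<or>
               (\<forall>y\<in>carrier H. H.ord y = p \<longrightarrow> \<not> is_p_group_set p (elem_centralizer H y))"
        if "Factorial_Ring.prime p" for p
        using N0 that by blast
      let ?R = "(cg_rel (G \<times>\<times> H))\<^sup>*"
      have adjX: "((u, v) \<in> ?R)" if "u \<in> carrier (G \<times>\<times> H)" "v \<in> carrier (G \<times>\<times> H)"
        "u \<otimes>\<^bsub>G \<times>\<times> H\<^esub> v = v \<otimes>\<^bsub>G \<times>\<times> H\<^esub> u" "Factorial_Ring.prime (X.ord u)"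
        "Factorial_Ring.prime (X.ord v)" "X.ord u \<noteq> X.ord v" for u v
      proof -
        have u1: "u \<noteq> \<one>\<^bsub>G \<times>\<times> H\<^esub>" and v1: "v \<noteq> \<one>\<^bsub>G \<times>\<times> H\<^esub>" using that X.ord_id by auto
        have cop: "coprime (X.ord u) (X.ord v)" using that primes_coprime by blast
        show ?thesis using adj_rel[OF X.coprime_adj[OF finX that(1-3) cop u1 v1]] .
      qed
      have claimC: "((a, \<one>\<^bsub>H\<^esub>), (\<one>\<^bsub>G\<^esub>, b)) \<in> ?R"
        if a: "a \<in> carrier G" "Factorial_Ring.prime (G.ord a)"
          and b: "b \<in> carrier H" "Factorial_Ring.prime (H.ord b)" for a b
      proof (cases "G.ord a = H.ord b")
        case False
        show ?thesis by (rule adjX[of "(a, \<one>\<^bsub>H\<^esub>)" "(\<one>\<^bsub>G\<^esub>, b)"]) (use a b ordL ordR False in simp_all)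
      next
        case True
        show ?thesis
        using N[OF a(2)]
        proof
          assume NG: "\<forall>x\<in>carrier G. G.ord x = G.ord a \<longrightarrow> \<not> is_p_group_set (G.ord a) (elem_centralizer G x)"
          obtain r c where rc: "Factorial_Ring.prime r" "r \<noteq> G.ord a" "c \<in> elem_centralizer G a" "G.ord c = r"
          proof -
            have "\<not> is_p_group_set (G.ord a) (elem_centralizer G a)" using NG a by blast
            then show ?thesis using G.non_pgroup_prime[OF assms(3) G.centralizer_subgroup[OF a(1)], of "G.ord a"] that by blast
          qed
          have cc: "c \<in> carrier G" "c \<otimes>\<^bsub>G\<^esub> a = a \<otimes>\<^bsub>G\<^esub> c" using rc(3) by (auto simp: elem_centralizer_def)
          have 1: "((a, \<one>\<^bsub>H\<^esub>), (c, \<one>\<^bsub>H\<^esub>)) \<in> ?R"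
            by (rule adjX[of "(a, \<one>\<^bsub>H\<^esub>)" "(c, \<one>\<^bsub>H\<^esub>)"]) (use a cc rc ordL in simp_all)
          have 2: "((c, \<one>\<^bsub>H\<^esub>), (\<one>\<^bsub>G\<^esub>, b)) \<in> ?R"
            by (rule adjX[of "(c, \<one>\<^bsub>H\<^esub>)" "(\<one>\<^bsub>G\<^esub>, b)"]) (use b cc rc ordL ordR True in simp_all)
          show ?thesis using 1 2 by (rule rtrancl_trans)
        next
          assume NH: "\<forall>y\<in>carrier H. H.ord y = G.ord a \<longrightarrow> \<not> is_p_group_set (G.ord a) (elem_centralizer H y)"
          obtain r d where rd: "Factorial_Ring.prime r" "r \<noteq> G.ord a" "d \<in> elem_centralizer H b" "H.ord d = r"
          proof -
            have "\<not> is_p_group_set (G.ord a) (elem_centralizer H b)" using NH b True by metis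
            then show ?thesis using H.non_pgroup_prime[OF assms(4) H.centralizer_subgroup[OF b(1)], of "G.ord a"] that by blast
          qed
          have dc: "d \<in> carrier H" "d \<otimes>\<^bsub>H\<^esub> b = b \<otimes>\<^bsub>H\<^esub> d" using rd(3) by (auto simp: elem_centralizer_def)
          have 1: "((a, \<one>\<^bsub>H\<^esub>), (\<one>\<^bsub>G\<^esub>, d)) \<in> ?R"
            by (rule adjX[of "(a, \<one>\<^bsub>H\<^esub>)" "(\<one>\<^bsub>G\<^esub>, d)"]) (use a dc rd ordL ordR in simp_all)
          have 2: "((\<one>\<^bsub>G\<^esub>, d), (\<one>\<^bsub>G\<^esub>, b)) \<in> ?R"
            by (rule adjX[of "(\<one>\<^bsub>G\<^esub>, d)" "(\<one>\<^bsub>G\<^esub>, b)"]) (use b dc rd ordR True in simp_all)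
          show ?thesis using 1 2 by (rule rtrancl_trans)
        qed
      qed
      have reach: "\<exists>u. (w, u) \<in> ?R \<and> ((\<exists>a\<in>carrier G. Factorial_Ring.prime (G.ord a) \<and> u = (a, \<one>\<^bsub>H\<^esub>)) \<or>
                       (\<exists>b\<in>carrier H. Factorial_Ring.prime (H.ord b) \<and> u = (\<one>\<^bsub>G\<^esub>, b)))"
        if w: "w \<in> carrier (G \<times>\<times> H)" "w \<noteq> \<one>\<^bsub>G \<times>\<times> H\<^esub>" for w
      proof -
        obtain w' where w': "w' \<in> carrier (G \<times>\<times> H)" "Factorial_Ring.prime (X.ord w')" "(w, w') \<in> ?R"
          using X.reach_prime[OF finX w] by blast
        obtain a b where ab: "w' = (a, b)" "a \<in> carrier G" "b \<in> carrier H" using w'(1) by auto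
        define p where "p = X.ord w'"
        have p: "Factorial_Ring.prime p" using w'(2) p_def by simp
        show ?thesis
        proof (cases "b = \<one>\<^bsub>H\<^esub>")
          case True
          have "Factorial_Ring.prime (G.ord a)" using w'(2) ab(1,2) True ordL by simp
          moreover have "(w, (a, \<one>\<^bsub>H\<^esub>)) \<in> ?R" using w'(3) ab(1) True by simp
          ultimately show ?thesis using ab(2) by blast
        next
          case bF: False
          show ?thesis
          proof (cases "a = \<one>\<^bsub>G\<^esub>")
            case True
            have "Factorial_Ring.prime (H.ord b)" using w'(2) ab(1,3) True ordR by simp
            moreover have "(w, (\<one>\<^bsub>G\<^esub>, b)) \<in> ?R" using w'(3) ab(1) True by simp
            ultimately show ?thesis using ab(3) by blast
          next
            case aF: False
            have "w' [^]\<^bsub>G \<times>\<times> H\<^esub> p = \<one>\<^bsub>G \<times>\<times> H\<^esub>" using w'(1) p_def by simp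
            then have "a [^]\<^bsub>G\<^esub> p = \<one>\<^bsub>G\<^esub>" "b [^]\<^bsub>H\<^esub> p = \<one>\<^bsub>H\<^esub>"
              using pow_DirProd_one[OF assms(1,2) ab(2,3)] ab(1) by auto
            then have "G.ord a dvd p" "H.ord b dvd p" using G.pow_eq_id ab H.pow_eq_id by auto
            moreover have "G.ord a \<noteq> 1" "H.ord b \<noteq> 1" using aF bF ab G.ord_eq_1 H.ord_eq_1 by auto
            ultimately have oab: "G.ord a = p" "H.ord b = p" using p prime_nat_iff by blast+
            have wp: "X.ord (a, b) = p" using ord_DirProd_same[OF assms(1,2) ab(2,3) oab] .
            show ?thesis
            using N[OF p]
            proof
              assume NG: "\<forall>x\<in>carrier G. G.ord x = p \<longrightarrow> \<not> is_p_group_set p (elem_centralizer G x)"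
              obtain r c where rc: "Factorial_Ring.prime r" "r \<noteq> p" "c \<in> elem_centralizer G a" "G.ord c = r"
              proof -
                have "\<not> is_p_group_set p (elem_centralizer G a)" using NG ab oab by blast
                then show ?thesis using G.non_pgroup_prime[OF assms(3) G.centralizer_subgroup[OF ab(2)], of p] that by blast
              qed
              have cc: "c \<in> carrier G" "c \<otimes>\<^bsub>G\<^esub> a = a \<otimes>\<^bsub>G\<^esub> c" using rc(3) by (auto simp: elem_centralizer_def)
              have "((a, b), (c, \<one>\<^bsub>H\<^esub>)) \<in> ?R"
                by (rule adjX[of "(a, b)" "(c, \<one>\<^bsub>H\<^esub>)"]) (use ab cc rc wp p ordL in simp_all)
              then have "(w, (c, \<one>\<^bsub>H\<^esub>)) \<in> ?R" using w'(3) ab(1) by (simp add: rtrancl_trans)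
              then show ?thesis using cc(1) rc by blast
            next
              assume NH: "\<forall>y\<in>carrier H. H.ord y = p \<longrightarrow> \<not> is_p_group_set p (elem_centralizer H y)"
              obtain r d where rd: "Factorial_Ring.prime r" "r \<noteq> p" "d \<in> elem_centralizer H b" "H.ord d = r"
              proof -
                have "\<not> is_p_group_set p (elem_centralizer H b)" using NH ab oab by blast
                then show ?thesis using H.non_pgroup_prime[OF assms(4) H.centralizer_subgroup[OF ab(3)], of p] that by blast
              qed
              have dc: "d \<in> carrier H" "d \<otimes>\<^bsub>H\<^esub> b = b \<otimes>\<^bsub>H\<^esub> d" using rd(3) by (auto simp: elem_centralizer_def)
              have "((a, b), (\<one>\<^bsub>G\<^esub>, d)) \<in> ?R"
                by (rule adjX[of "(a, b)" "(\<one>\<^bsub>G\<^esub>, d)"]) (use ab dc rd wp p ordR in simp_all)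
              then have "(w, (\<one>\<^bsub>G\<^esub>, d)) \<in> ?R" using w'(3) ab(1) by (simp add: rtrancl_trans)
              then show ?thesis using dc(1) rd by blast
            qed
          qed
        qed
      qed
      have "\<not> carrier G \<subseteq> {\<one>\<^bsub>G\<^esub>}" using assms(5) G.one_closed by auto
      then obtain g where g: "g \<in> carrier G" "g \<noteq> \<one>\<^bsub>G\<^esub>" by blast
      obtain g0 where g0: "g0 \<in> carrier G" "Factorial_Ring.prime (G.ord g0)"
        using G.reach_prime[OF assms(3) g] by blast
      have "\<not> carrier H \<subseteq> {\<one>\<^bsub>H\<^esub>}" using assms(6) H.one_closed by auto
      then obtain h where h: "h \<in> carrier H" "h \<noteq> \<one>\<^bsub>H\<^esub>" by blast
      obtain h0 where h0: "h0 \<in> carrier H" "Factorial_Ring.prime (H.ord h0)"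
        using H.reach_prime[OF assms(4) h] by blast
      have hub: "(w, (\<one>\<^bsub>G\<^esub>, h0)) \<in> ?R" if "w \<in> cyclic_graph_vertices (G \<times>\<times> H)" for w
      proof -
        have w: "w \<in> carrier (G \<times>\<times> H)" "w \<noteq> \<one>\<^bsub>G \<times>\<times> H\<^esub>"
          using that by (auto simp: cyclic_graph_vertices_def)
        obtain u where u: "(w, u) \<in> ?R" "(\<exists>a\<in>carrier G. Factorial_Ring.prime (G.ord a) \<and> u = (a, \<one>\<^bsub>H\<^esub>)) \<or>
                       (\<exists>b\<in>carrier H. Factorial_Ring.prime (H.ord b) \<and> u = (\<one>\<^bsub>G\<^esub>, b))"
          using reach[OF w] by blast
        have "(u, (\<one>\<^bsub>G\<^esub>, h0)) \<in> ?R"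
          using u(2)
        proof
          assume "\<exists>a\<in>carrier G. Factorial_Ring.prime (G.ord a) \<and> u = (a, \<one>\<^bsub>H\<^esub>)"
          then show ?thesis using claimC h0 by blast
        next
          assume "\<exists>b\<in>carrier H. Factorial_Ring.prime (H.ord b) \<and> u = (\<one>\<^bsub>G\<^esub>, b)"
          then obtain b where b: "b \<in> carrier H" "Factorial_Ring.prime (H.ord b)" "u = (\<one>\<^bsub>G\<^esub>, b)" by blast
          have "((g0, \<one>\<^bsub>H\<^esub>), u) \<in> ?R" using claimC[OF g0 b(1,2)] b(3) by simp
          then have "(u, (g0, \<one>\<^bsub>H\<^esub>)) \<in> ?R" by (rule rel_sym)
          then show ?thesis using rtrancl_trans[OF _ claimC[OF g0 h0]] by blast
        qed
        then show ?thesis using rtrancl_trans[OF u(1)] by blast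
      qed
      have "cyclic_graph_connected (G \<times>\<times> H)"
        unfolding conn_def
      proof (intro ballI)
        fix x y assume "x \<in> cyclic_graph_vertices (G \<times>\<times> H)" "y \<in> cyclic_graph_vertices (G \<times>\<times> H)"
        then have xh: "(x, (\<one>\<^bsub>G\<^esub>, h0)) \<in> ?R" and yh: "(y, (\<one>\<^bsub>G\<^esub>, h0)) \<in> ?R" using hub by blast+
        show "(x, y) \<in> ?R" using rtrancl_trans[OF xh rel_sym[OF yh]] .
      qed
      then show False using nc by simp
    qed
  next
    assume "\<exists>p::nat. Factorial_Ring.prime p \<and>
       (\<exists>x \<in> carrier G. group.ord G x = p \<and> is_p_group_set p (elem_centralizer G x)) \<and>
       (\<exists>y \<in> carrier H. group.ord H y = p \<and> is_p_group_set p (elem_centralizer H y))"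
    then obtain p x y where p: "Factorial_Ring.prime p" and x: "x \<in> carrier G" "G.ord x = p"
      "is_p_group_set p (elem_centralizer G x)" and y: "y \<in> carrier H" "H.ord y = p"
      "is_p_group_set p (elem_centralizer H y)" by blast
    let ?z = "(x, y)"
    have p1: "p \<noteq> 1" using p by auto
    have x1: "x \<noteq> \<one>\<^bsub>G\<^esub>" using x p1 by auto
    have y1: "y \<noteq> \<one>\<^bsub>H\<^esub>" using y p1 by auto
    have zc: "?z \<in> carrier (G \<times>\<times> H)" using x y by simp
    have oz: "X.ord ?z = p" using ord_DirProd_same[OF assms(1,2) x(1) y(1) x(2) y(2)] .
    have pgz: "is_p_group_set p (elem_centralizer (G \<times>\<times> H) ?z)"
    proof -
      obtain m n where "card (elem_centralizer G x) = p ^ m" "card (elem_centralizer H y) = p ^ n"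
        "finite (elem_centralizer G x)" "finite (elem_centralizer H y)"
        using x(3) y(3) unfolding is_p_group_set_def by blast
      then show ?thesis unfolding is_p_group_set_def centralizer_DirProd
        by (simp add: card_cartesian_product) (rule exI[of _ "m + n"], simp add: power_add)
    qed
    have inv: "?z \<in> generate (G \<times>\<times> H) {w}" if "(?z, w) \<in> (cg_rel (G \<times>\<times> H))\<^sup>*" for w
      using that
    proof (induction rule: rtrancl_induct)
      case base
      then show ?case by (auto intro: generate.incl)
    next
      case (step w v)
      then show ?case using X.inv_step[OF finX zc oz p pgz] by (auto simp: cg_rel_def)
    qed
    have "\<not> (?z, (x, \<one>\<^bsub>H\<^esub>)) \<in> (cg_rel (G \<times>\<times> H))\<^sup>*"
    proof
      assume "(?z, (x, \<one>\<^bsub>H\<^esub>)) \<in> (cg_rel (G \<times>\<times> H))\<^sup>*"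
      then have "?z \<in> generate (G \<times>\<times> H) {(x, \<one>\<^bsub>H\<^esub>)}" using inv by blast
      then obtain n :: nat where "?z = (x, \<one>\<^bsub>H\<^esub>) [^]\<^bsub>G \<times>\<times> H\<^esub> n"
        using X.gen_fin_pow[OF finX] x by fastforce
      then have "y = \<one>\<^bsub>H\<^esub> [^]\<^bsub>H\<^esub> n" using pow_DirProd[OF assms(1,2)] by simp
      then show False using y1 by simp
    qed
    moreover have "?z \<in> cyclic_graph_vertices (G \<times>\<times> H)" "(x, \<one>\<^bsub>H\<^esub>) \<in> cyclic_graph_vertices (G \<times>\<times> H)"
      using x y x1 by (auto simp: cyclic_graph_vertices_def)
    ultimately show "\<not> cyclic_graph_connected (G \<times>\<times> H)" unfolding conn_def by blast
  qed
qed


end
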